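(* Let $Y_0$ and $Y_1$ be real-valued random variables on a common probability space, with marginal cumulative distribution functions $F_0$ and $F_1$, and let $Q_j(u)=\inf\{y\in\mathbb{R}: F_j(y)\geq u\}$, $j\in\{0,1\}$, be the left-continuous generalized inverses (quantile functions). Let $U$ be a random variable on the same space with $U\sim U(0,1)$ and $Y_0=Q_0(U)$ (the joint distribution of $(U,Y_1)$ is otherwise arbitrary). Let $0\leq a<b\leq 1$. Then, conditional on the event $\{a<U<b\}$, \[ Q_1(b-U)-Q_0(U)\preceq_{2}Y_1-Y_0\preceq_{2}Q_1(1-b+U)-Q_0(U). \]
   Context: $A\preceq_2 B$ means that the distribution of $A$ is second-order stochastically dominated by that of $B$, i.e. $\mathbb{E}[h(A)]\leq\mathbb{E}[h(B)]$ for every nondecreasing concave function $h:\mathbb{R}\to\mathbb{R}$ (for which the expectations are defined). "Conditional on $a<U<b$" means the comparison is made for the conditional distributions given $\{a<U<b\}$; equivalently, $\mathbb{E}[h(A)\mathbbm{1}\{a<U<b\}]\leq\mathbb{E}[h(B)\mathbbm{1}\{a<U<b\}]$ for all such $h$. *)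

theory Defs
  imports "HOL-Probability.Probability"
begin

definition quantile_fn :: "(real \<Rightarrow> real) \<Rightarrow> real \<Rightarrow> real" where
  "quantile_fn F u = Inf {y. F y \<ge> u}"

text \<open>Second-order stochastic dominance of A by B conditional on the event E,
  in the indicator form E[h(A) 1_E] \<le> E[h(B) 1_E] for every nondecreasing concave h
  for which these expectations are defined (finite).\<close>
definition cond_ssd_le :: "'a measure \<Rightarrow> ('a \<Rightarrow> real) \<Rightarrow> ('a \<Rightarrow> real) \<Rightarrow> 'a set \<Rightarrow> bool" where
  "cond_ssd_le M A B E \<longleftrightarrow>
     (\<forall>h :: real \<Rightarrow> real. mono h \<and> concave_on UNIV h
        \<and> integrable M (\<lambda>x. h (A x) * indicator E x)
        \<and> integrable M (\<lambda>x. h (B x) * indicator E x)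
      \<longrightarrow> (\<integral>x. h (A x) * indicator E x \<partial>M) \<le> (\<integral>x. h (B x) * indicator E x \<partial>M))"

end

theory Submission
  imports Defs
begin

lemma concave_incr:
  fixes h :: "real \<Rightarrow> real"
  assumes "concave_on UNIV h" "x \<le> x'" "0 < d"
  shows "h (x' + d) - h x' \<le> h (x + d) - h x"
proof (cases "x = x'")
  case False
  then have lt: "x < x'" using assms by simp
  define t where "t = (x' - x) / (x' - x + d)"
  have t0: "0 \<le> t" "t \<le> 1" using lt assms(3) by (auto simp: t_def field_simps)
  have tt: "t * (x' - x + d) = x' - x" using lt assms(3) by (simp add: t_def)
  have e1: "(1 - t) *\<^sub>R x + t *\<^sub>R (x' + d) = x'"
  proof -
    have "(1 - t) * x + t * (x' + d) = x + t * (x' - x + d)" by (simp add: algebra_simps)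
    then show ?thesis using tt by simp
  qed
  have e2: "(1 - t) *\<^sub>R (x' + d) + t *\<^sub>R x = x + d"
  proof -
    have "(1 - t) * (x' + d) + t * x = x' + d - t * (x' - x + d)" by (simp add: algebra_simps)
    then show ?thesis using tt by simp
  qed
  have "h x' \<ge> (1 - t) * h x + t * h (x' + d)"
    using concave_onD[OF assms(1) t0, of x "x'+d"] e1 by simp
  moreover have "h (x + d) \<ge> (1 - t) * h (x' + d) + t * h x"
    using concave_onD[OF assms(1) t0, of "x'+d" x] e2 by simp
  ultimately show ?thesis by (simp add: algebra_simps)
qed simp

lemma concave_cont:
  fixes h :: "real \<Rightarrow> real"
  assumes "concave_on UNIV h"
  shows "continuous_on UNIV h"
proof -
  have "convex_on UNIV (\<lambda>x. - h x)" using assms by (simp add: convex_on_iff_concave)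
  then have "continuous_on UNIV (\<lambda>x. - h x)" by (intro convex_on_continuous) auto
  from continuous_on_minus[OF this] show ?thesis by simp
qed


lemma quantile_galois:
  fixes F :: "real \<Rightarrow> real"
  assumes mono: "mono F" and rc: "\<And>a. continuous (at_right a) F"
    and bot: "(F \<longlongrightarrow> 0) at_bot" and top: "(F \<longlongrightarrow> 1) at_top"
    and v: "0 < v" "v < 1"
  shows "quantile_fn F v \<le> s \<longleftrightarrow> v \<le> F s"
proof -
  let ?S = "{y. v \<le> F y}"
  have "eventually (\<lambda>y. F y > v) at_top" using order_tendstoD(1)[OF top] v by simp
  then obtain y0 where "F y0 > v" by (auto simp: eventually_at_top_linorder)
  then have ne: "?S \<noteq> {}" by (auto intro!: exI[of _ y0])
  have "eventually (\<lambda>y. F y < v) at_bot" using order_tendstoD(2)[OF bot] v by simp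
  then obtain L where L: "\<And>y. y \<le> L \<Longrightarrow> F y < v" by (auto simp: eventually_at_bot_linorder)
  have bdd: "bdd_below ?S"
  proof (rule bdd_belowI[of _ L])
    fix y assume "y \<in> ?S"
    then have "v \<le> F y" by simp
    show "L \<le> y"
    proof (rule ccontr)
      assume "\<not> L \<le> y"
      then have "F y < v" using L[of y] by simp
      then show False using \<open>v \<le> F y\<close> by simp
    qed
  qed
  have q: "quantile_fn F v = Inf ?S" by (simp add: quantile_fn_def)
  show ?thesis
  proof
    assume "v \<le> F s"
    then show "quantile_fn F v \<le> s" unfolding q by (intro cInf_lower bdd) auto
  next
    assume le: "quantile_fn F v \<le> s"
    let ?q = "Inf ?S"
    have "v \<le> F ?q"
    proof (rule ccontr)
      assume "\<not> v \<le> F ?q"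
      then have "F ?q < v" by simp
      moreover have "(F \<longlongrightarrow> F ?q) (at_right ?q)" using rc[of ?q] by (simp add: continuous_within)
      ultimately have "eventually (\<lambda>y. F y < v) (at_right ?q)" using order_tendstoD(2) by blast
      then obtain b where b: "b > ?q" "\<And>y. ?q < y \<Longrightarrow> y < b \<Longrightarrow> F y < v"
        by (auto simp: eventually_at_right_field)
      obtain y where y: "y \<in> ?S" "y < b" using cInf_less_iff[OF ne bdd, of b] b(1) by auto
      have "?q \<le> y" using y(1) bdd by (intro cInf_lower) auto
      show False
      proof (cases "?q = y")
        case True then show False using y(1) \<open>F ?q < v\<close> by simp
      next
        case False then show False using b(2)[of y] y \<open>?q \<le> y\<close> by auto
      qed
    qed
    also have "F ?q \<le> F s" using le q mono by (simp add: monoD)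
    finally show "v \<le> F s" .
  qed
qed


context real_distribution begin

lemma q_galois:
  assumes "0 < v" "v < 1"
  shows "quantile_fn (cdf M) v \<le> s \<longleftrightarrow> v \<le> cdf M s"
  by (rule quantile_galois[OF _ cdf_is_right_cont cdf_lim_at_bot cdf_lim_at_top_prob assms])
     (simp add: mono_def cdf_nondecreasing)

lemma q_mono:
  assumes "0 < u" "u \<le> u'" "u' < 1"
  shows "quantile_fn (cdf M) u \<le> quantile_fn (cdf M) u'"
proof -
  have "u' \<le> cdf M (quantile_fn (cdf M) u')" using q_galois[of u' "quantile_fn (cdf M) u'"] assms by simp
  then show ?thesis using q_galois[of u] assms by simp
qed

lemma q_meas: "quantile_fn (cdf M) \<in> borel_measurable borel"
proof (rule borel_measurable_piecewise_mono[of "{{..0}, {0<..<1}, {1}, {1<..}}"])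
  fix c :: "real set" assume c: "c \<in> {{..0}, {0<..<1}, {1}, {1<..}}"
  have A: "quantile_fn (cdf M) u = Inf UNIV" if "u \<le> 0" for u
  proof -
    have "{y. cdf M y \<ge> u} = UNIV" using that cdf_nonneg by (auto intro: order_trans)
    then show ?thesis by (simp add: quantile_fn_def)
  qed
  have B: "quantile_fn (cdf M) u = Inf {}" if "u > 1" for u
  proof -
    have "{y. cdf M y \<ge> u} = {}" using that cdf_bounded_prob by (auto simp: not_le intro: le_less_trans)
    then show ?thesis by (simp add: quantile_fn_def)
  qed
  from c show "mono_on c (quantile_fn (cdf M))"
    by (auto simp: mono_on_def A B intro: q_mono)
qed auto

lemma cdf_measure: "cdf M s = measure M {..s}" by (simp add: cdf_def)

end

lemma (in prob_space) cdf_distr: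
  assumes "Y \<in> borel_measurable M"
  shows "cdf (distr M borel Y) s = prob {x \<in> space M. Y x \<le> s}"
proof -
  have "cdf (distr M borel Y) s = measure (distr M borel Y) {..s}" by (simp add: cdf_def)
  also have "\<dots> = prob (Y -` {..s} \<inter> space M)" by (rule measure_distr[OF assms]) auto
  also have "Y -` {..s} \<inter> space M = {x \<in> space M. Y x \<le> s}" by auto
  finally show ?thesis .
qed

lemma (in prob_space) unif_interval:
  assumes U: "U \<in> borel_measurable M" and d: "distr M lborel U = uniform_measure lborel {0<..<1}"
    and "0 \<le> \<alpha>" "\<alpha> \<le> \<beta>" "\<beta> \<le> 1"
  shows "prob {x \<in> space M. \<alpha> < U x \<and> U x < \<beta>} = \<beta> - \<alpha>"
proof -
  have "prob {x \<in> space M. \<alpha> < U x \<and> U x < \<beta>} = prob (U -` {\<alpha><..<\<beta>} \<inter> space M)"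
    by (intro arg_cong[where f=prob]) auto
  also have "\<dots> = measure (distr M lborel U) {\<alpha><..<\<beta>}"
    using U by (intro measure_distr[symmetric]) auto
  also have "\<dots> = measure lborel ({0<..<1} \<inter> {\<alpha><..<\<beta>}) / measure lborel {0<..<(1::real)}"
    unfolding d by (intro measure_uniform_measure) auto
  also have "{0<..<1} \<inter> {\<alpha><..<\<beta>} = {\<alpha><..<\<beta>}" using assms by auto
  finally show ?thesis using assms by simp
qed


lemma core1d:
  fixes H G :: "real \<Rightarrow> real"
  assumes derH: "\<And>x. (H has_real_derivative G x) (at x)" and G0: "\<And>x. 0 \<le> G x"
  shows "(\<integral>\<^sup>+s. indicator {y'..<y} s * ennreal (G (s - z)) \<partial>lborel) = ennreal (H (y - z) - H (y' - z))"
proof (cases "y' \<le> y")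
  case True
  have d: "((\<lambda>s. H (s - z)) has_real_derivative G (s - z)) (at s)" for s
  proof -
    have "((\<lambda>s. s - z) has_real_derivative 1) (at s)" by (auto intro!: derivative_eq_intros)
    from DERIV_chain2[OF derH this] show ?thesis by simp
  qed
  have "((\<lambda>s. G (s - z)) has_integral (H (y - z) - H (y' - z))) {y'..y}"
    using fundamental_theorem_of_calculus[OF True, of "\<lambda>s. H (s - z)" "\<lambda>s. G (s - z)"] d
    by (auto simp: has_real_derivative_iff_has_vector_derivative[symmetric] intro: has_field_derivative_at_within)
  from nn_integral_has_integral_lebesgue[OF _ this] G0
  have e: "(\<integral>\<^sup>+s. ennreal (indicator {y'..y} s * G (s - z)) \<partial>lborel) = ennreal (H (y - z) - H (y' - z))"
    by simp
  have "(\<integral>\<^sup>+s. indicator {y'..<y} s * ennreal (G (s - z)) \<partial>lborel)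
      = (\<integral>\<^sup>+s. ennreal (indicator {y'..y} s * G (s - z)) \<partial>lborel)"
    using AE_lborel_singleton[of y]
    by (intro nn_integral_cong_AE) (auto elim!: eventually_mono simp: indicator_def)
  with e show ?thesis by simp
next
  case False
  have "H (y - z) \<le> H (y' - z)"
    using False by (intro DERIV_nonneg_imp_nondecreasing[of _ _ H]) (use derH G0 in auto)
  then show ?thesis using False by (simp add: ennreal_neg)
qed

lemma assembly:
  fixes M :: "'a measure" and P R Z :: "'a \<Rightarrow> real" and H G :: "real \<Rightarrow> real"
  assumes M: "prob_space M"
    and meas[measurable]: "P \<in> borel_measurable M" "R \<in> borel_measurable M" "Z \<in> borel_measurable M" "E \<in> sets M"
    and derH: "\<And>x. (H has_real_derivative G x) (at x)"
    and G0: "\<And>x. 0 \<le> G x" and Gm[measurable]: "G \<in> borel_measurable borel"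
    and int1: "integrable M (\<lambda>\<omega>. H (R \<omega> - Z \<omega>) * indicator E \<omega>)"
    and int2: "integrable M (\<lambda>\<omega>. H (P \<omega> - Z \<omega>) * indicator E \<omega>)"
    and key: "\<And>s. (\<integral>\<^sup>+\<omega>. indicator {\<omega>\<in>E. R \<omega> \<le> s \<and> s < P \<omega>} \<omega> * ennreal (G (s - Z \<omega>)) \<partial>M)
                 \<le> (\<integral>\<^sup>+\<omega>. indicator {\<omega>\<in>E. P \<omega> \<le> s \<and> s < R \<omega>} \<omega> * ennreal (G (s - Z \<omega>)) \<partial>M)"
  shows "(\<integral>\<omega>. H (P \<omega> - Z \<omega>) * indicator E \<omega> \<partial>M) \<le> (\<integral>\<omega>. H (R \<omega> - Z \<omega>) * indicator E \<omega> \<partial>M)"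
proof -
  interpret prob_space M by fact
  interpret pair_sigma_finite M lborel
    by (simp add: lborel.sigma_finite_measure_axioms pair_sigma_finite.intro sigma_finite_measure_axioms)
  have contH: "continuous_on UNIV H"
    using derH by (meson DERIV_isCont continuous_at_imp_continuous_on)
  have Hm[measurable]: "H \<in> borel_measurable borel" using contH by (rule borel_measurable_continuous_onI)
  define f where "f \<omega> = (H (R \<omega> - Z \<omega>) - H (P \<omega> - Z \<omega>)) * indicator E \<omega>" for \<omega>
  have intf: "integrable M f" unfolding f_def left_diff_distrib using int1 int2 by (rule Bochner_Integration.integrable_diff)
  define Up where "Up s = {\<omega>\<in>E. P \<omega> \<le> s \<and> s < R \<omega>}" for s
  define Dn where "Dn s = {\<omega>\<in>E. R \<omega> \<le> s \<and> s < P \<omega>}" for s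
  have Up_ind: "indicator (Up s) \<omega> = (indicator E \<omega> * (if P \<omega> \<le> s \<and> s < R \<omega> then 1 else 0) :: ennreal)" for s \<omega>
    by (auto simp: Up_def indicator_def)
  have Dn_ind: "indicator (Dn s) \<omega> = (indicator E \<omega> * (if R \<omega> \<le> s \<and> s < P \<omega> then 1 else 0) :: ennreal)" for s \<omega>
    by (auto simp: Dn_def indicator_def)
  have sl: "sets (M \<Otimes>\<^sub>M lborel) = sets (M \<Otimes>\<^sub>M borel)"
    by (intro sets_pair_measure_cong) auto
  have mUp: "(\<lambda>(\<omega>, s). indicator (Up s) \<omega> * ennreal (G (s - Z \<omega>))) \<in> borel_measurable (M \<Otimes>\<^sub>M lborel)"
    unfolding measurable_cong_sets[OF sl refl] unfolding Up_ind by measurable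
  have mDn: "(\<lambda>(\<omega>, s). indicator (Dn s) \<omega> * ennreal (G (s - Z \<omega>))) \<in> borel_measurable (M \<Otimes>\<^sub>M lborel)"
    unfolding measurable_cong_sets[OF sl refl] unfolding Dn_ind by measurable
  have pUp: "(\<integral>\<^sup>+s. indicator (Up s) \<omega> * ennreal (G (s - Z \<omega>)) \<partial>lborel) = ennreal (f \<omega>)" for \<omega>
  proof (cases "\<omega> \<in> E")
    case True
    then show ?thesis
    proof -
      have "(\<lambda>s. indicator (Up s) \<omega> * ennreal (G (s - Z \<omega>))) = (\<lambda>s. indicator {P \<omega>..<R \<omega>} s * ennreal (G (s - Z \<omega>)))"
        using True by (auto simp: Up_def indicator_def fun_eq_iff)
      then show ?thesis using core1d[OF derH G0, of "P \<omega>" "R \<omega>" "Z \<omega>"] True by (simp add: f_def)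
    qed
  qed (simp add: Up_ind f_def)
  have pDn: "(\<integral>\<^sup>+s. indicator (Dn s) \<omega> * ennreal (G (s - Z \<omega>)) \<partial>lborel) = ennreal (- f \<omega>)" for \<omega>
  proof (cases "\<omega> \<in> E")
    case True
    then show ?thesis
    proof -
      have "(\<lambda>s. indicator (Dn s) \<omega> * ennreal (G (s - Z \<omega>))) = (\<lambda>s. indicator {R \<omega>..<P \<omega>} s * ennreal (G (s - Z \<omega>)))"
        using True by (auto simp: Dn_def indicator_def fun_eq_iff)
      then show ?thesis using core1d[OF derH G0, of "R \<omega>" "P \<omega>" "Z \<omega>"] True by (simp add: f_def)
    qed
  qed (simp add: Dn_ind f_def)
  have "(\<integral>\<^sup>+\<omega>. ennreal (- f \<omega>) \<partial>M) = (\<integral>\<^sup>+\<omega>. (\<integral>\<^sup>+s. indicator (Dn s) \<omega> * ennreal (G (s - Z \<omega>)) \<partial>lborel) \<partial>M)"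
    by (simp add: pDn)
  also have "\<dots> = (\<integral>\<^sup>+s. (\<integral>\<^sup>+\<omega>. indicator (Dn s) \<omega> * ennreal (G (s - Z \<omega>)) \<partial>M) \<partial>lborel)"
    using Fubini'[OF mDn] by simp
  also have "\<dots> \<le> (\<integral>\<^sup>+s. (\<integral>\<^sup>+\<omega>. indicator (Up s) \<omega> * ennreal (G (s - Z \<omega>)) \<partial>M) \<partial>lborel)"
    by (rule nn_integral_mono) (use key in \<open>simp add: Up_def Dn_def\<close>)
  also have "\<dots> = (\<integral>\<^sup>+\<omega>. (\<integral>\<^sup>+s. indicator (Up s) \<omega> * ennreal (G (s - Z \<omega>)) \<partial>lborel) \<partial>M)"
    using Fubini'[OF mUp] by simp
  also have "\<dots> = (\<integral>\<^sup>+\<omega>. ennreal (f \<omega>) \<partial>M)"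
    by (simp add: pUp)
  finally have le: "(\<integral>\<^sup>+\<omega>. ennreal (- f \<omega>) \<partial>M) \<le> (\<integral>\<^sup>+\<omega>. ennreal (f \<omega>) \<partial>M)" .
  have fin: "(\<integral>\<^sup>+\<omega>. ennreal (f \<omega>) \<partial>M) < top" using integrableD(2)[OF intf] by (simp add: top.not_eq_extremum)
  have "0 \<le> integral\<^sup>L M f"
    unfolding real_lebesgue_integral_def[OF intf] using enn2real_mono[OF le fin] by simp
  also have "integral\<^sup>L M f = (\<integral>\<omega>. H (R \<omega> - Z \<omega>) * indicator E \<omega> \<partial>M) - (\<integral>\<omega>. H (P \<omega> - Z \<omega>) * indicator E \<omega> \<partial>M)"
    unfolding f_def left_diff_distrib by (rule Bochner_Integration.integral_diff[OF int1 int2])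
  finally show ?thesis by simp
qed


lemma bathtub:
  fixes M :: "'a measure" and g :: "'a \<Rightarrow> real"
  assumes M: "prob_space M" and gm: "g \<in> borel_measurable M" and g0: "\<And>\<omega>. 0 \<le> g \<omega>"
    and ST: "S \<in> sets M" "T \<in> sets M" and k0: "0 \<le> k"
    and gT: "\<And>\<omega>. \<omega> \<in> T - S \<Longrightarrow> g \<omega> \<le> k" and gS: "\<And>\<omega>. \<omega> \<in> S - T \<Longrightarrow> k \<le> g \<omega>"
    and meas: "measure M T \<le> measure M S"
  shows "(\<integral>\<^sup>+\<omega>. indicator (T - S) \<omega> * ennreal (g \<omega>) \<partial>M) \<le> (\<integral>\<^sup>+\<omega>. indicator (S - T) \<omega> * ennreal (g \<omega>) \<partial>M)"
proof -
  interpret prob_space M by fact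
  have "(\<integral>\<^sup>+\<omega>. indicator (T - S) \<omega> * ennreal (g \<omega>) \<partial>M) \<le> (\<integral>\<^sup>+\<omega>. ennreal k * indicator (T - S) \<omega> \<partial>M)"
    by (intro nn_integral_mono) (auto simp: indicator_def gT ennreal_leI)
  also have "\<dots> = ennreal k * emeasure M (T - S)" using ST by (intro nn_integral_cmult_indicator) auto
  also have "\<dots> = ennreal (k * measure M (T - S))" by (simp add: emeasure_eq_measure ennreal_mult k0)
  also have "\<dots> \<le> ennreal (k * measure M (S - T))"
  proof (intro ennreal_leI mult_left_mono k0)
    show "measure M (T - S) \<le> measure M (S - T)"
      using meas ST by (simp add: finite_measure_Diff' Int_commute)
  qed
  also have "\<dots> = (\<integral>\<^sup>+\<omega>. ennreal k * indicator (S - T) \<omega> \<partial>M)"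
    using ST by (subst nn_integral_cmult_indicator) (auto simp: emeasure_eq_measure ennreal_mult k0)
  also have "\<dots> \<le> (\<integral>\<^sup>+\<omega>. indicator (S - T) \<omega> * ennreal (g \<omega>) \<partial>M)"
    by (intro nn_integral_mono) (auto simp: indicator_def gS ennreal_leI)
  finally show ?thesis .
qed

lemma null_int:
  assumes "A \<in> sets M" "emeasure M A = 0"
  shows "(\<integral>\<^sup>+\<omega>. indicator A \<omega> * f \<omega> \<partial>M) = 0"
proof -
  have "AE \<omega> in M. \<omega> \<notin> A" using assms by (intro AE_not_in) auto
  then have "(\<integral>\<^sup>+\<omega>. indicator A \<omega> * f \<omega> \<partial>M) = (\<integral>\<^sup>+\<omega>. 0 \<partial>M)"
    by (intro nn_integral_cong_AE) (auto elim!: eventually_mono)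
  then show ?thesis by simp
qed


locale setting = prob_space M for M :: "'a measure" +
  fixes U Y1 :: "'a \<Rightarrow> real" and N0 :: "real measure" and a b :: real and G :: "real \<Rightarrow> real"
  assumes Um[measurable]: "U \<in> borel_measurable M" and Y1m[measurable]: "Y1 \<in> borel_measurable M"
    and dU: "distr M lborel U = uniform_measure lborel {0<..<1}"
    and rd0: "real_distribution N0"
    and ab: "0 \<le> a" "a < b" "b \<le> 1"
    and G0: "\<And>x. 0 \<le> G x" and Gmono: "\<And>x y. x \<le> y \<Longrightarrow> G y \<le> G x"
    and Gm[measurable]: "G \<in> borel_measurable borel"
begin

definition "E = {x \<in> space M. a < U x \<and> U x < b}"
abbreviation "Q0 \<equiv> quantile_fn (cdf N0)"
abbreviation "F1 \<equiv> cdf (distr M borel Y1)"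
abbreviation "Q1 \<equiv> quantile_fn F1"

lemma rd1: "real_distribution (distr M borel Y1)" by simp

lemma Q0m[measurable]: "Q0 \<in> borel_measurable borel"
  using real_distribution.q_meas[OF rd0] .
lemma Q1m[measurable]: "Q1 \<in> borel_measurable borel"
  using real_distribution.q_meas[OF rd1] .
lemma Em[measurable]: "E \<in> sets M" unfolding E_def by measurable

lemma F1_eq: "F1 s = prob {x \<in> space M. Y1 x \<le> s}" by (rule cdf_distr) simp

lemma probU: "0 \<le> \<alpha> \<Longrightarrow> \<alpha> \<le> \<beta> \<Longrightarrow> \<beta> \<le> 1 \<Longrightarrow> prob {x \<in> space M. \<alpha> < U x \<and> U x < \<beta>} = \<beta> - \<alpha>"
  by (rule unif_interval[OF Um dU])

lemma Gk_le: "0 < u \<Longrightarrow> u \<le> c \<Longrightarrow> c < 1 \<Longrightarrow> G (s - Q0 u) \<le> G (s - Q0 c)"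
  by (intro Gmono) (use real_distribution.q_mono[OF rd0, of u c] in simp)

lemma gm: "(\<lambda>\<omega>. G (s - Q0 (U \<omega>))) \<in> borel_measurable M" by measurable

lemma per_s_lower:
  "(\<integral>\<^sup>+\<omega>. indicator {\<omega>\<in>E. Y1 \<omega> \<le> s \<and> s < Q1 (b - U \<omega>)} \<omega> * ennreal (G (s - Q0 (U \<omega>))) \<partial>M)
   \<le> (\<integral>\<^sup>+\<omega>. indicator {\<omega>\<in>E. Q1 (b - U \<omega>) \<le> s \<and> s < Y1 \<omega>} \<omega> * ennreal (G (s - Q0 (U \<omega>))) \<partial>M)"
  (is "?L \<le> ?R")
proof -
  define c where "c = b - F1 s"
  define T where "T = {\<omega>\<in>E. U \<omega> < c}"
  define S where "S = {\<omega>\<in>E. s < Y1 \<omega>}"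
  have gal: "s < Q1 (b - U \<omega>) \<longleftrightarrow> U \<omega> < c" if "\<omega> \<in> E" for \<omega>
  proof -
    have "0 < b - U \<omega>" "b - U \<omega> < 1" using that ab by (auto simp: E_def)
    from real_distribution.q_galois[OF rd1 this, of s] show ?thesis by (auto simp: c_def not_le)
  qed
  have set1: "{\<omega>\<in>E. Y1 \<omega> \<le> s \<and> s < Q1 (b - U \<omega>)} = T - S"
    using gal by (auto simp: T_def S_def not_less)
  have gal2: "Q1 (b - U \<omega>) \<le> s \<longleftrightarrow> c \<le> U \<omega>" if "\<omega> \<in> E" for \<omega>
    using gal[OF that] by linarith
  have set2: "{\<omega>\<in>E. Q1 (b - U \<omega>) \<le> s \<and> s < Y1 \<omega>} = S - T"
    using gal2 by (auto simp: T_def S_def not_less)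
  have Tm: "T \<in> sets M" unfolding T_def using Em by measurable
  have Sm: "S \<in> sets M" unfolding S_def using Em by measurable
  have EU: "E \<subseteq> space M" "\<And>\<omega>. \<omega> \<in> E \<Longrightarrow> a < U \<omega> \<and> U \<omega> < b" by (auto simp: E_def)
  show ?thesis
    unfolding set1 set2
  proof (cases "c \<le> a")
    case True
    then have "T = {}" using EU by (force simp: T_def)
    then show "(\<integral>\<^sup>+\<omega>. indicator (T - S) \<omega> * ennreal (G (s - Q0 (U \<omega>))) \<partial>M) \<le> (\<integral>\<^sup>+\<omega>. indicator (S - T) \<omega> * ennreal (G (s - Q0 (U \<omega>))) \<partial>M)"
      by simp
  next
    case ca: False
    show "(\<integral>\<^sup>+\<omega>. indicator (T - S) \<omega> * ennreal (G (s - Q0 (U \<omega>))) \<partial>M) \<le> (\<integral>\<^sup>+\<omega>. indicator (S - T) \<omega> * ennreal (G (s - Q0 (U \<omega>))) \<partial>M)"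
    proof (cases "b \<le> c")
      case True
      then have "F1 s \<le> 0" by (simp add: c_def)
      then have "prob {x \<in> space M. Y1 x \<le> s} = 0" using F1_eq[of s] measure_nonneg by (metis antisym)
      moreover have sub: "T - S \<subseteq> {x \<in> space M. Y1 x \<le> s}" using EU by (auto simp: T_def S_def)
      have "prob (T - S) \<le> prob {x \<in> space M. Y1 x \<le> s}"
        by (rule finite_measure_mono[OF sub]) measurable
      ultimately have "prob (T - S) \<le> 0" by simp
      then have "prob (T - S) = 0" using measure_nonneg[of M "T - S"] by linarith
      then have "emeasure M (T - S) = 0" by (simp add: emeasure_eq_measure)
      then show ?thesis using Tm Sm by (simp add: null_int)
    next
      case cb: False
      show ?thesis
      proof (rule bathtub[OF prob_space_axioms gm _ Sm Tm])
        show "0 \<le> G (s - Q0 c)" by (rule G0)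
        show "G (s - Q0 (U \<omega>)) \<le> G (s - Q0 c)" if "\<omega> \<in> T - S" for \<omega>
        proof -
          have "\<omega> \<in> E" "U \<omega> < c" using that by (auto simp: T_def)
          then show ?thesis by (intro Gk_le) (use EU(2)[of \<omega>] ab cb in auto)
        qed
        show "G (s - Q0 c) \<le> G (s - Q0 (U \<omega>))" if "\<omega> \<in> S - T" for \<omega>
        proof -
          have "\<omega> \<in> E" "c \<le> U \<omega>" using that by (auto simp: T_def S_def)
          then show ?thesis by (intro Gk_le) (use EU(2)[of \<omega>] ab ca in auto)
        qed
        have mT: "prob T = c - a"
        proof -
          have "T = {x \<in> space M. a < U x \<and> U x < c}" using cb by (auto simp: T_def E_def)
          then show ?thesis using probU[of a c] ab ca cb by simp
        qed
        have mE: "prob E = b - a" unfolding E_def using probU[of a b] ab by simp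
        have "S = E - {x \<in> space M. Y1 x \<le> s}" by (auto simp: S_def E_def)
        then have eq: "prob S = prob E - prob (E \<inter> {x \<in> space M. Y1 x \<le> s})"
          by (simp add: finite_measure_Diff')
        have le: "prob (E \<inter> {x \<in> space M. Y1 x \<le> s}) \<le> prob {x \<in> space M. Y1 x \<le> s}"
          by (intro finite_measure_mono) auto
        show "prob T \<le> prob S" using mT mE F1_eq[of s] eq le by (simp add: c_def)
      qed (rule G0)
    qed
  qed
qed


lemma per_s_upper:
  "(\<integral>\<^sup>+\<omega>. indicator {\<omega>\<in>E. Q1 (1 - b + U \<omega>) \<le> s \<and> s < Y1 \<omega>} \<omega> * ennreal (G (s - Q0 (U \<omega>))) \<partial>M)
   \<le> (\<integral>\<^sup>+\<omega>. indicator {\<omega>\<in>E. Y1 \<omega> \<le> s \<and> s < Q1 (1 - b + U \<omega>)} \<omega> * ennreal (G (s - Q0 (U \<omega>))) \<partial>M)"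
proof -
  define c where "c = F1 s + b - 1"
  define T where "T = {\<omega>\<in>E. c < U \<omega>}"
  define S where "S = {\<omega>\<in>E. s < Y1 \<omega>}"
  have gal: "s < Q1 (1 - b + U \<omega>) \<longleftrightarrow> c < U \<omega>" if "\<omega> \<in> E" for \<omega>
  proof -
    have "0 < 1 - b + U \<omega>" "1 - b + U \<omega> < 1" using that ab by (auto simp: E_def)
    from real_distribution.q_galois[OF rd1 this, of s] show ?thesis by (auto simp: c_def not_le)
  qed
  have gal2: "Q1 (1 - b + U \<omega>) \<le> s \<longleftrightarrow> U \<omega> \<le> c" if "\<omega> \<in> E" for \<omega>
    using gal[OF that] by linarith
  have set1: "{\<omega>\<in>E. Q1 (1 - b + U \<omega>) \<le> s \<and> s < Y1 \<omega>} = S - T"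
    using gal2 by (auto simp: T_def S_def not_less)
  have set2: "{\<omega>\<in>E. Y1 \<omega> \<le> s \<and> s < Q1 (1 - b + U \<omega>)} = T - S"
    using gal by (auto simp: T_def S_def not_less)
  have Tm: "T \<in> sets M" unfolding T_def using Em by measurable
  have Sm: "S \<in> sets M" unfolding S_def using Em by measurable
  have EU: "E \<subseteq> space M" "\<And>\<omega>. \<omega> \<in> E \<Longrightarrow> a < U \<omega> \<and> U \<omega> < b" by (auto simp: E_def)
  show ?thesis
    unfolding set1 set2
  proof (cases "c \<le> a")
    case True
    then have eq: "S - T = {}" using EU by (force simp: T_def S_def)
    show "(\<integral>\<^sup>+\<omega>. indicator (S - T) \<omega> * ennreal (G (s - Q0 (U \<omega>))) \<partial>M) \<le> (\<integral>\<^sup>+\<omega>. indicator (T - S) \<omega> * ennreal (G (s - Q0 (U \<omega>))) \<partial>M)"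
      by (simp only: eq indicator_simps mult_zero_left) simp
  next
    case ca: False
    show "(\<integral>\<^sup>+\<omega>. indicator (S - T) \<omega> * ennreal (G (s - Q0 (U \<omega>))) \<partial>M) \<le> (\<integral>\<^sup>+\<omega>. indicator (T - S) \<omega> * ennreal (G (s - Q0 (U \<omega>))) \<partial>M)"
    proof (cases "b \<le> c")
      case True
      then have "1 \<le> F1 s" by (simp add: c_def)
      have cm: "prob {x \<in> space M. s < Y1 x} = 1 - prob {x \<in> space M. Y1 x \<le> s}"
      proof -
        have "{x \<in> space M. s < Y1 x} = space M - {x \<in> space M. Y1 x \<le> s}" by auto
        then show ?thesis using prob_compl[of "{x \<in> space M. Y1 x \<le> s}"] by simp
      qed
      have sub: "S - T \<subseteq> {x \<in> space M. s < Y1 x}" using EU by (auto simp: T_def S_def)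
      have "prob (S - T) \<le> prob {x \<in> space M. s < Y1 x}"
        by (rule finite_measure_mono[OF sub]) measurable
      then have "prob (S - T) \<le> 0" using cm F1_eq[of s] \<open>1 \<le> F1 s\<close> by simp
      then have "prob (S - T) = 0" using measure_nonneg[of M "S - T"] by linarith
      then have "emeasure M (S - T) = 0" by (simp add: emeasure_eq_measure)
      then show ?thesis using Tm Sm by (simp add: null_int)
    next
      case cb: False
      show ?thesis
      proof (rule bathtub[OF prob_space_axioms gm _ Tm Sm])
        show "0 \<le> G (s - Q0 c)" by (rule G0)
        show "G (s - Q0 (U \<omega>)) \<le> G (s - Q0 c)" if "\<omega> \<in> S - T" for \<omega>
        proof -
          have "\<omega> \<in> E" "U \<omega> \<le> c" using that by (auto simp: T_def S_def)
          then show ?thesis by (intro Gk_le) (use EU(2)[of \<omega>] ab cb in auto)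
        qed
        show "G (s - Q0 c) \<le> G (s - Q0 (U \<omega>))" if "\<omega> \<in> T - S" for \<omega>
        proof -
          have "\<omega> \<in> E" "c < U \<omega>" using that by (auto simp: T_def S_def)
          then show ?thesis by (intro Gk_le) (use EU(2)[of \<omega>] ab ca in auto)
        qed
        have mT: "prob T = b - c"
        proof -
          have "T = {x \<in> space M. c < U x \<and> U x < b}" using ca ab by (auto simp: T_def E_def)
          then show ?thesis using probU[of c b] ab ca cb by simp
        qed
        have cm: "prob {x \<in> space M. s < Y1 x} = 1 - prob {x \<in> space M. Y1 x \<le> s}"
        proof -
          have "{x \<in> space M. s < Y1 x} = space M - {x \<in> space M. Y1 x \<le> s}" by auto
          then show ?thesis using prob_compl[of "{x \<in> space M. Y1 x \<le> s}"] by simp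
        qed
        have sub: "S \<subseteq> {x \<in> space M. s < Y1 x}" using EU by (auto simp: S_def)
        have "prob S \<le> prob {x \<in> space M. s < Y1 x}"
          by (rule finite_measure_mono[OF sub]) measurable
        then show "prob S \<le> prob T" using mT cm F1_eq[of s] by (simp add: c_def)
      qed (rule G0)
    qed
  qed
qed

end

lemma shift_bound:
  fixes h :: "real \<Rightarrow> real"
  assumes cv: "concave_on UNIV h" and mo: "mono h"
  shows "\<bar>h (x + 1)\<bar> \<le> \<bar>h x\<bar> + \<bar>h 1\<bar> + \<bar>h 1 - h 0\<bar>"
proof (cases "x \<le> 0")
  case True
  have "h x \<le> h (x + 1)" "h (x + 1) \<le> h 1" using True mo by (auto intro: monoD)
  then show ?thesis by linarith
next
  case False
  have "h x \<le> h (x + 1)" using mo by (auto intro: monoD)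
  moreover have "h (x + 1) - h x \<le> h (0 + 1) - h 0" using False by (intro concave_incr[OF cv]) auto
  ultimately show ?thesis by simp
qed

lemma smoothing:
  fixes h :: "real \<Rightarrow> real"
  assumes cv: "concave_on UNIV h" and mo: "mono h"
  obtains Hs Gs :: "nat \<Rightarrow> real \<Rightarrow> real" where
    "\<And>n x. (Hs n has_real_derivative Gs n x) (at x)"
    "\<And>n x. 0 \<le> Gs n x"
    "\<And>n x y. x \<le> y \<Longrightarrow> Gs n y \<le> Gs n x"
    "\<And>n. Gs n \<in> borel_measurable borel"
    "\<And>n x. h x \<le> Hs n x" "\<And>n x. Hs n x \<le> h (x + 1)"
    "\<And>x. (\<lambda>n. Hs n x) \<longlonglongrightarrow> h x"
proof -
  have ch: "continuous_on UNIV h" by (rule concave_cont[OF cv])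
  then have ic: "isCont h x" for x by (simp add: continuous_on_eq_continuous_at)
  obtain A where A: "\<And>x. (A has_vector_derivative h x) (at x)"
    using einterval_antiderivative[of "-\<infinity>" "\<infinity>" h] ic by auto
  have dA: "(A has_real_derivative h x) (at x)" for x
    using A by (simp add: has_real_derivative_iff_has_vector_derivative)
  define d :: "nat \<Rightarrow> real" where "d n = 1 / (real n + 1)" for n
  have d0: "0 < d n" "d n \<le> 1" for n by (auto simp: d_def field_simps)
  define Hs where "Hs n x = (A (x + d n) - A x) / d n" for n x
  define Gs where "Gs n x = (h (x + d n) - h x) / d n" for n x
  have P1: "(Hs n has_real_derivative Gs n x) (at x)" for n x
  proof -
    have dAs: "((\<lambda>x. A (x + d n)) has_real_derivative h (x + d n)) (at x)"
    proof -
      have "((\<lambda>x. x + d n) has_real_derivative 1) (at x)" by (auto intro!: derivative_eq_intros)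
      from DERIV_chain2[OF dA this] show ?thesis by simp
    qed
    show ?thesis
      unfolding Hs_def Gs_def by (intro DERIV_cdivide DERIV_diff dA dAs)
  qed
  have P2: "0 \<le> Gs n x" for n x
  proof -
    have "h x \<le> h (x + d n)" using d0[of n] mo by (auto intro: monoD)
    then show ?thesis using d0[of n] by (simp add: Gs_def)
  qed
  have P3: "Gs n y \<le> Gs n x" if "x \<le> y" for n x y
  proof -
    have "h (y + d n) - h y \<le> h (x + d n) - h x" using d0 that by (intro concave_incr[OF cv]) auto
    then show "Gs n y \<le> Gs n x" unfolding Gs_def using d0[of n] by (simp add: divide_right_mono)
  qed
  have P4: "Gs n \<in> borel_measurable borel" for n
  proof -
    have c0: "continuous_on UNIV (\<lambda>x. x + d n)" by (intro continuous_intros)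
    have c1: "continuous_on UNIV (\<lambda>x. h (x + d n))"
      using continuous_on_compose2[OF ch c0] by simp
    have "continuous_on UNIV (Gs n)" unfolding Gs_def
      by (intro continuous_on_divide continuous_on_diff c1 ch continuous_on_const) (use d0(1)[of n] in auto)
    then show "Gs n \<in> borel_measurable borel" by (rule borel_measurable_continuous_onI)
  qed
  have MV: "\<exists>z. x < z \<and> z < x + d n \<and> Hs n x = h z" for n x
  proof -
    obtain z where z: "x < z" "z < x + d n" "A (x + d n) - A x = (x + d n - x) * h z"
      using MVT2[of x "x + d n" A h] dA d0[of n] by auto
    have "Hs n x = h z" unfolding Hs_def z(3) using d0[of n] by simp
    with z show ?thesis by auto
  qed
  have P5: "h x \<le> Hs n x" for n x
  proof -
    obtain z where "x < z" "Hs n x = h z" using MV[of x n] by auto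
    then show ?thesis using mo by (auto intro: monoD)
  qed
  have P6': "Hs n x \<le> h (x + d n)" for n x
  proof -
    obtain z where "z < x + d n" "Hs n x = h z" using MV[of x n] by auto
    then show ?thesis using mo by (auto intro: monoD)
  qed
  have P6: "Hs n x \<le> h (x + 1)" for n x
  proof -
    have "h (x + d n) \<le> h (x + 1)" using d0[of n] mo by (auto intro: monoD)
    then show ?thesis using P6'[of n x] by simp
  qed
  have P7: "(\<lambda>n. Hs n x) \<longlonglongrightarrow> h x" for x
  proof -
    have dl: "d \<longlonglongrightarrow> 0" unfolding d_def using LIMSEQ_inverse_real_of_nat
      by (simp add: inverse_eq_divide add.commute)
    have l2: "(\<lambda>n. h (x + d n)) \<longlonglongrightarrow> h (x + 0)"
      by (intro isCont_tendsto_compose[OF ic] tendsto_intros dl)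
    show ?thesis
    proof (rule tendsto_sandwich[of "\<lambda>n. h x" _ _ "\<lambda>n. h (x + d n)"])
      show "\<forall>\<^sub>F n in sequentially. h x \<le> Hs n x" using P5 by simp
      show "\<forall>\<^sub>F n in sequentially. Hs n x \<le> h (x + d n)" using P6' by simp
      show "(\<lambda>n. h x) \<longlonglongrightarrow> h x" by simp
      show "(\<lambda>n. h (x + d n)) \<longlonglongrightarrow> h x" using l2 by simp
    qed
  qed
  show ?thesis by (rule that[OF P1 P2 P3 P4 P5 P6 P7])
qed


lemma int_shift:
  fixes h f :: "real \<Rightarrow> real" and M :: "'a measure"
  assumes M: "prob_space M" and cv: "concave_on UNIV h" and mo: "mono h"
    and E[measurable]: "E \<in> sets M" and X[measurable]: "X \<in> borel_measurable M"
    and int: "integrable M (\<lambda>\<omega>. h (X \<omega>) * indicator E \<omega>)"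
    and fm[measurable]: "f \<in> borel_measurable borel"
    and lo: "\<And>x. h x \<le> f x" and up: "\<And>x. f x \<le> h (x + 1)"
  shows "integrable M (\<lambda>\<omega>. f (X \<omega>) * indicator E \<omega>)"
    and "AE \<omega> in M. norm (f (X \<omega>) * indicator E \<omega>) \<le> 2 * \<bar>h (X \<omega>) * indicator E \<omega>\<bar> + (\<bar>h 1\<bar> + \<bar>h 1 - h 0\<bar>) * indicator E \<omega>"
    and "integrable M (\<lambda>\<omega>. 2 * \<bar>h (X \<omega>) * indicator E \<omega>\<bar> + (\<bar>h 1\<bar> + \<bar>h 1 - h 0\<bar>) * indicator E \<omega>)"
proof -
  interpret prob_space M by fact
  define C where "C = \<bar>h 1\<bar> + \<bar>h 1 - h 0\<bar>"
  have b: "\<bar>f x\<bar> \<le> 2 * \<bar>h x\<bar> + C" for x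
    using lo[of x] up[of x] shift_bound[OF cv mo, of x] by (simp add: C_def)
  show W: "integrable M (\<lambda>\<omega>. 2 * \<bar>h (X \<omega>) * indicator E \<omega>\<bar> + (\<bar>h 1\<bar> + \<bar>h 1 - h 0\<bar>) * indicator E \<omega>)"
    using int by (intro Bochner_Integration.integrable_add integrable_mult_right integrable_abs
        integrable_mult_left integrable_real_indicator) (auto simp: emeasure_eq_measure)
  show B: "AE \<omega> in M. norm (f (X \<omega>) * indicator E \<omega>) \<le> 2 * \<bar>h (X \<omega>) * indicator E \<omega>\<bar> + (\<bar>h 1\<bar> + \<bar>h 1 - h 0\<bar>) * indicator E \<omega>"
    using b by (auto simp: indicator_def C_def)
  show "integrable M (\<lambda>\<omega>. f (X \<omega>) * indicator E \<omega>)"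
  proof (rule Bochner_Integration.integrable_bound[OF W])
    show "(\<lambda>\<omega>. f (X \<omega>) * indicator E \<omega>) \<in> borel_measurable M" by measurable
    show "AE \<omega> in M. norm (f (X \<omega>) * indicator E \<omega>) \<le> norm (2 * \<bar>h (X \<omega>) * indicator E \<omega>\<bar> + (\<bar>h 1\<bar> + \<bar>h 1 - h 0\<bar>) * indicator E \<omega>)"
      using B by (auto elim!: eventually_mono)
  qed
qed

lemma limit_ineq:
  fixes h :: "real \<Rightarrow> real" and M :: "'a measure" and Hs :: "nat \<Rightarrow> real \<Rightarrow> real"
  assumes M: "prob_space M" and cv: "concave_on UNIV h" and mo: "mono h"
    and E[measurable]: "E \<in> sets M" and X1[measurable]: "X1 \<in> borel_measurable M" and X2[measurable]: "X2 \<in> borel_measurable M"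
    and int1: "integrable M (\<lambda>\<omega>. h (X1 \<omega>) * indicator E \<omega>)"
    and int2: "integrable M (\<lambda>\<omega>. h (X2 \<omega>) * indicator E \<omega>)"
    and Hm[measurable]: "\<And>n. Hs n \<in> borel_measurable borel"
    and lo: "\<And>n x. h x \<le> Hs n x" and up: "\<And>n x. Hs n x \<le> h (x + 1)"
    and lim: "\<And>x. (\<lambda>n. Hs n x) \<longlonglongrightarrow> h x"
    and hyp: "\<And>n. (\<integral>\<omega>. Hs n (X1 \<omega>) * indicator E \<omega> \<partial>M) \<le> (\<integral>\<omega>. Hs n (X2 \<omega>) * indicator E \<omega> \<partial>M)"
  shows "(\<integral>\<omega>. h (X1 \<omega>) * indicator E \<omega> \<partial>M) \<le> (\<integral>\<omega>. h (X2 \<omega>) * indicator E \<omega> \<partial>M)"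
proof -
  have hm[measurable]: "h \<in> borel_measurable borel"
    using concave_cont[OF cv] by (rule borel_measurable_continuous_onI)
  have conv: "(\<lambda>n. \<integral>\<omega>. Hs n (X \<omega>) * indicator E \<omega> \<partial>M) \<longlonglongrightarrow> (\<integral>\<omega>. h (X \<omega>) * indicator E \<omega> \<partial>M)"
    if X[measurable]: "X \<in> borel_measurable M" and int: "integrable M (\<lambda>\<omega>. h (X \<omega>) * indicator E \<omega>)" for X
  proof (rule integral_dominated_convergence)
    show "(\<lambda>\<omega>. h (X \<omega>) * indicator E \<omega>) \<in> borel_measurable M" by measurable
    show "(\<lambda>\<omega>. Hs n (X \<omega>) * indicator E \<omega>) \<in> borel_measurable M" for n by measurable
    show "integrable M (\<lambda>\<omega>. 2 * \<bar>h (X \<omega>) * indicator E \<omega>\<bar> + (\<bar>h 1\<bar> + \<bar>h 1 - h 0\<bar>) * indicator E \<omega>)"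
      by (rule int_shift(3)[OF M cv mo E X int Hm lo up])
    show "AE \<omega> in M. norm (Hs n (X \<omega>) * indicator E \<omega>) \<le> 2 * \<bar>h (X \<omega>) * indicator E \<omega>\<bar> + (\<bar>h 1\<bar> + \<bar>h 1 - h 0\<bar>) * indicator E \<omega>" for n
      by (rule int_shift(2)[OF M cv mo E X int Hm lo up])
    show "AE \<omega> in M. (\<lambda>n. Hs n (X \<omega>) * indicator E \<omega>) \<longlonglongrightarrow> h (X \<omega>) * indicator E \<omega>"
      using lim by (intro AE_I2 tendsto_mult tendsto_const) auto
  qed
  show ?thesis by (rule LIMSEQ_le[OF conv[OF X1 int1] conv[OF X2 int2]]) (use hyp in auto)
qed


theorem theoremA1:
  fixes M :: "'a measure" and Y0 Y1 U :: "'a \<Rightarrow> real" and a b :: real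
  assumes "prob_space M"
    and "Y0 \<in> borel_measurable M" and "Y1 \<in> borel_measurable M" and "U \<in> borel_measurable M"
    and "distr M lborel U = uniform_measure lborel {0<..<1}"
    and "AE x in M. Y0 x = quantile_fn (cdf (distr M borel Y0)) (U x)"
    and "0 \<le> a" and "a < b" and "b \<le> 1"
  shows "cond_ssd_le M
           (\<lambda>x. quantile_fn (cdf (distr M borel Y1)) (b - U x) - quantile_fn (cdf (distr M borel Y0)) (U x))
           (\<lambda>x. Y1 x - Y0 x)
           {x \<in> space M. a < U x \<and> U x < b}
       \<and> cond_ssd_le M
           (\<lambda>x. Y1 x - Y0 x)
           (\<lambda>x. quantile_fn (cdf (distr M borel Y1)) (1 - b + U x) - quantile_fn (cdf (distr M borel Y0)) (U x))
           {x \<in> space M. a < U x \<and> U x < b}"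
proof -
  interpret P: prob_space M by fact
  note [measurable] = assms(2,3,4)
  define E where "E = {x \<in> space M. a < U x \<and> U x < b}"
  define Q0 where "Q0 = quantile_fn (cdf (distr M borel Y0))"
  define Q1 where "Q1 = quantile_fn (cdf (distr M borel Y1))"
  have rd0: "real_distribution (distr M borel Y0)" by simp
  have rd1: "real_distribution (distr M borel Y1)" by simp
  have Q0m[measurable]: "Q0 \<in> borel_measurable borel" unfolding Q0_def by (rule real_distribution.q_meas[OF rd0])
  have Q1m[measurable]: "Q1 \<in> borel_measurable borel" unfolding Q1_def by (rule real_distribution.q_meas[OF rd1])
  have Em[measurable]: "E \<in> sets M" unfolding E_def by measurable
  have AEY: "AE x in M. Y1 x - Y0 x = Y1 x - Q0 (U x)" using assms(6) by (auto simp: Q0_def elim!: eventually_mono)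
  have gen: "(\<integral>\<omega>. h (P \<omega> - Q0 (U \<omega>)) * indicator E \<omega> \<partial>M) \<le> (\<integral>\<omega>. h (R \<omega> - Q0 (U \<omega>)) * indicator E \<omega> \<partial>M)"
    if mo: "mono h" and cv: "concave_on UNIV h"
      and Pm[measurable]: "P \<in> borel_measurable M" and Rm[measurable]: "R \<in> borel_measurable M"
      and i1: "integrable M (\<lambda>\<omega>. h (P \<omega> - Q0 (U \<omega>)) * indicator E \<omega>)"
      and i2: "integrable M (\<lambda>\<omega>. h (R \<omega> - Q0 (U \<omega>)) * indicator E \<omega>)"
      and key: "\<And>G s. setting M U Y1 (distr M borel Y0) a b G \<Longrightarrow>
         (\<integral>\<^sup>+\<omega>. indicator {\<omega>\<in>E. R \<omega> \<le> s \<and> s < P \<omega>} \<omega> * ennreal (G (s - Q0 (U \<omega>))) \<partial>M)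
                 \<le> (\<integral>\<^sup>+\<omega>. indicator {\<omega>\<in>E. P \<omega> \<le> s \<and> s < R \<omega>} \<omega> * ennreal (G (s - Q0 (U \<omega>))) \<partial>M)"
    for h P R
  proof -
    obtain Hs Gs :: "nat \<Rightarrow> real \<Rightarrow> real" where
      H1: "\<And>n x. (Hs n has_real_derivative Gs n x) (at x)" and
      H2: "\<And>n x. 0 \<le> Gs n x" and
      H3: "\<And>n x y. x \<le> y \<Longrightarrow> Gs n y \<le> Gs n x" and
      H4: "\<And>n. Gs n \<in> borel_measurable borel" and
      H5: "\<And>n x. h x \<le> Hs n x" and H6: "\<And>n x. Hs n x \<le> h (x + 1)" and
      H7: "\<And>x. (\<lambda>n. Hs n x) \<longlonglongrightarrow> h x"
      by (rule smoothing[OF cv mo]) blast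
    have Hm: "Hs n \<in> borel_measurable borel" for n
    proof -
      have "continuous_on UNIV (Hs n)" using H1 by (meson DERIV_isCont continuous_at_imp_continuous_on)
      then show ?thesis by (rule borel_measurable_continuous_onI)
    qed
    show ?thesis
    proof (rule limit_ineq[OF assms(1) cv mo Em _ _ i1 i2 Hm H5 H6 H7])
      fix n
      interpret S: setting M U Y1 "distr M borel Y0" a b "Gs n"
        by (rule setting.intro[OF assms(1) setting_axioms.intro[OF assms(4) assms(3) assms(5) rd0 assms(7) assms(8) assms(9) H2[of n] H3 H4[of n]]])
      have hm[measurable]: "h \<in> borel_measurable borel"
      using concave_cont[OF cv] by (rule borel_measurable_continuous_onI)
    have i1': "integrable M (\<lambda>\<omega>. Hs n (P \<omega> - Q0 (U \<omega>)) * indicator E \<omega>)"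
        by (rule int_shift(1)[OF assms(1) cv mo Em _ i1 Hm H5 H6]) measurable
      have hm[measurable]: "h \<in> borel_measurable borel"
      using concave_cont[OF cv] by (rule borel_measurable_continuous_onI)
    have i2': "integrable M (\<lambda>\<omega>. Hs n (R \<omega> - Q0 (U \<omega>)) * indicator E \<omega>)"
        by (rule int_shift(1)[OF assms(1) cv mo Em _ i2 Hm H5 H6]) measurable
      show "(\<integral>\<omega>. Hs n (P \<omega> - Q0 (U \<omega>)) * indicator E \<omega> \<partial>M) \<le> (\<integral>\<omega>. Hs n (R \<omega> - Q0 (U \<omega>)) * indicator E \<omega> \<partial>M)"
      proof (rule assembly[where M=M and P=P and R=R and Z="\<lambda>\<omega>. Q0 (U \<omega>)" and E=E and H="Hs n" and G="Gs n"])
        show "(\<lambda>\<omega>. Q0 (U \<omega>)) \<in> borel_measurable M" by measurable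
        show "integrable M (\<lambda>\<omega>. Hs n (R \<omega> - Q0 (U \<omega>)) * indicator E \<omega>)" by (rule i2')
        show "integrable M (\<lambda>\<omega>. Hs n (P \<omega> - Q0 (U \<omega>)) * indicator E \<omega>)" by (rule i1')
        show "(\<integral>\<^sup>+\<omega>. indicator {\<omega>\<in>E. R \<omega> \<le> s \<and> s < P \<omega>} \<omega> * ennreal (Gs n (s - Q0 (U \<omega>))) \<partial>M)
                 \<le> (\<integral>\<^sup>+\<omega>. indicator {\<omega>\<in>E. P \<omega> \<le> s \<and> s < R \<omega>} \<omega> * ennreal (Gs n (s - Q0 (U \<omega>))) \<partial>M)" for s
          by (rule key[OF S.setting_axioms])
      qed (use assms(1) Pm Rm Em H1 H2 H4 in auto)
    qed measurable
  qed
  have ES: "setting.E M U a b = E" if "setting M U Y1 (distr M borel Y0) a b G" for G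
    using setting.E_def[OF that] by (simp add: E_def)
  show ?thesis
    unfolding cond_ssd_le_def
  proof (intro conjI allI impI; elim conjE)
    fix h :: "real \<Rightarrow> real"
    assume mo: "mono h" and cv: "concave_on UNIV h"
      and i1: "integrable M (\<lambda>x. h (quantile_fn (cdf (distr M borel Y1)) (b - U x) - quantile_fn (cdf (distr M borel Y0)) (U x)) * indicator {x \<in> space M. a < U x \<and> U x < b} x)"
      and i2: "integrable M (\<lambda>x. h (Y1 x - Y0 x) * indicator {x \<in> space M. a < U x \<and> U x < b} x)"
    have hm[measurable]: "h \<in> borel_measurable borel"
      using concave_cont[OF cv] by (rule borel_measurable_continuous_onI)
    have i2': "integrable M (\<lambda>x. h (Y1 x - Q0 (U x)) * indicator E x)"
      unfolding E_def
      apply (rule integrable_cong_AE_imp[OF i2])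
       apply measurable
      using AEY by (auto elim!: eventually_mono)
    have "(\<integral>\<omega>. h (Q1 (b - U \<omega>) - Q0 (U \<omega>)) * indicator E \<omega> \<partial>M) \<le> (\<integral>\<omega>. h (Y1 \<omega> - Q0 (U \<omega>)) * indicator E \<omega> \<partial>M)"
    proof (rule gen[OF mo cv _ _ _ i2'])
      show "integrable M (\<lambda>\<omega>. h (Q1 (b - U \<omega>) - Q0 (U \<omega>)) * indicator E \<omega>)"
        using i1 by (simp add: Q0_def Q1_def E_def)
      fix G s assume st: "setting M U Y1 (distr M borel Y0) a b G"
      show "(\<integral>\<^sup>+\<omega>. indicator {\<omega>\<in>E. Y1 \<omega> \<le> s \<and> s < Q1 (b - U \<omega>)} \<omega> * ennreal (G (s - Q0 (U \<omega>))) \<partial>M)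
                 \<le> (\<integral>\<^sup>+\<omega>. indicator {\<omega>\<in>E. Q1 (b - U \<omega>) \<le> s \<and> s < Y1 \<omega>} \<omega> * ennreal (G (s - Q0 (U \<omega>))) \<partial>M)"
        using setting.per_s_lower[OF st, of s] ES[OF st] by (simp add: Q0_def Q1_def)
    qed measurable
    moreover have "(\<integral>\<omega>. h (Y1 \<omega> - Q0 (U \<omega>)) * indicator E \<omega> \<partial>M) = (\<integral>x. h (Y1 x - Y0 x) * indicator {x \<in> space M. a < U x \<and> U x < b} x \<partial>M)"
      unfolding E_def by (rule integral_cong_AE) (use AEY in \<open>auto elim!: eventually_mono\<close>)
    ultimately show "(\<integral>x. h (quantile_fn (cdf (distr M borel Y1)) (b - U x) - quantile_fn (cdf (distr M borel Y0)) (U x)) * indicator {x \<in> space M. a < U x \<and> U x < b} x \<partial>M)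
       \<le> (\<integral>x. h (Y1 x - Y0 x) * indicator {x \<in> space M. a < U x \<and> U x < b} x \<partial>M)"
      by (simp add: Q0_def Q1_def E_def)
  next
    fix h :: "real \<Rightarrow> real"
    assume mo: "mono h" and cv: "concave_on UNIV h"
      and i2: "integrable M (\<lambda>x. h (quantile_fn (cdf (distr M borel Y1)) (1 - b + U x) - quantile_fn (cdf (distr M borel Y0)) (U x)) * indicator {x \<in> space M. a < U x \<and> U x < b} x)"
      and i1: "integrable M (\<lambda>x. h (Y1 x - Y0 x) * indicator {x \<in> space M. a < U x \<and> U x < b} x)"
    have hm[measurable]: "h \<in> borel_measurable borel"
      using concave_cont[OF cv] by (rule borel_measurable_continuous_onI)
    have i1': "integrable M (\<lambda>x. h (Y1 x - Q0 (U x)) * indicator E x)"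
      unfolding E_def
      apply (rule integrable_cong_AE_imp[OF i1])
       apply measurable
      using AEY by (auto elim!: eventually_mono)
    have "(\<integral>\<omega>. h (Y1 \<omega> - Q0 (U \<omega>)) * indicator E \<omega> \<partial>M) \<le> (\<integral>\<omega>. h (Q1 (1 - b + U \<omega>) - Q0 (U \<omega>)) * indicator E \<omega> \<partial>M)"
    proof (rule gen[OF mo cv _ _ i1'])
      show "integrable M (\<lambda>\<omega>. h (Q1 (1 - b + U \<omega>) - Q0 (U \<omega>)) * indicator E \<omega>)"
        using i2 by (simp add: Q0_def Q1_def E_def)
      fix G s assume st: "setting M U Y1 (distr M borel Y0) a b G"
      show "(\<integral>\<^sup>+\<omega>. indicator {\<omega>\<in>E. Q1 (1 - b + U \<omega>) \<le> s \<and> s < Y1 \<omega>} \<omega> * ennreal (G (s - Q0 (U \<omega>))) \<partial>M)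
                 \<le> (\<integral>\<^sup>+\<omega>. indicator {\<omega>\<in>E. Y1 \<omega> \<le> s \<and> s < Q1 (1 - b + U \<omega>)} \<omega> * ennreal (G (s - Q0 (U \<omega>))) \<partial>M)"
        using setting.per_s_upper[OF st, of s] ES[OF st] by (simp add: Q0_def Q1_def)
    qed measurable
    moreover have "(\<integral>\<omega>. h (Y1 \<omega> - Q0 (U \<omega>)) * indicator E \<omega> \<partial>M) = (\<integral>x. h (Y1 x - Y0 x) * indicator {x \<in> space M. a < U x \<and> U x < b} x \<partial>M)"
      unfolding E_def by (rule integral_cong_AE) (use AEY in \<open>auto elim!: eventually_mono\<close>)
    ultimately show "(\<integral>x. h (Y1 x - Y0 x) * indicator {x \<in> space M. a < U x \<and> U x < b} x \<partial>M)
       \<le> (\<integral>x. h (quantile_fn (cdf (distr M borel Y1)) (1 - b + U x) - quantile_fn (cdf (distr M borel Y0)) (U x)) * indicator {x \<in> space M. a < U x \<and> U x < b} x \<partial>M)"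
      by (simp add: Q0_def Q1_def E_def)
  qed
qed

end
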